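(* Let $\bm H_S$ be a finite-dimensional Hilbert space, $\rho$ a density operator on $\bm H_S$, and $\{E_b\}_{b\in B}$ a POVM on $\bm H_S$ with finite outcome set $B$. Put $p(b):=\mathrm{tr}[E_b\rho]$ and, for $p(b)>0$, $\rho_b:=\sqrt{E_b}\,\rho\,\sqrt{E_b}/p(b)$. Let $\bm H_R$ be a finite-dimensional Hilbert space and $|\Psi\rangle\in\bm H_S\otimes\bm H_R$ a purification of $\rho$, i.e. $\mathrm{tr}_R[|\Psi\rangle\langle\Psi|]=\rho$. Define $\rho^R:=\mathrm{tr}_S[|\Psi\rangle\langle\Psi|]$ and, for $p(b)>0$, $\rho^R_b:=\mathrm{tr}_S[(\sqrt{E_b}\otimes I^R)|\Psi\rangle\langle\Psi|(\sqrt{E_b}\otimes I^R)]/p(b)$, where $I^R$ is the identity on $\bm H_R$. Then $$S(\rho)-\sum_b p(b)\,S(\rho_b)=S(\rho^R)-\sum_b p(b)\,S(\rho^R_b),$$ where the sums range over $b$ with $p(b)>0$. That is, the QC-mutual information $I^{S:B}_{\rm QC}$ equals the $\chi$-quantity $\chi^{BR}$ of the ensemble $\{p(b),\rho^R_b\}$.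
   Context: A POVM is a family $\{E_b\}$ of positive operators with $\sum_b E_b=I$. $S(\sigma):=-\mathrm{tr}[\sigma\ln\sigma]$ is the von Neumann entropy (with $0\ln 0=0$). The QC-mutual information is $I^{S:B}_{\rm QC}:=S(\rho)-\sum_b p(b)S(\rho_b)$, and the $\chi$-quantity of an ensemble $\{p(b),\sigma_b\}$ with $\sigma=\sum_b p(b)\sigma_b$ is $S(\sigma)-\sum_b p(b)S(\sigma_b)$; note $\rho^R=\sum_b p(b)\rho^R_b$. *)

theory Defs
  imports "Jordan_Normal_Form.Char_Poly" "Jordan_Normal_Form.Conjugate"
    "HOL-Computational_Algebra.Fundamental_Theorem_Algebra"
begin

text \<open>Finite-dimensional Hilbert spaces are modelled as C^n; operators as complex n x n
  matrices (type complex mat with carrier_mat n n).  The tensor product C^n (x) C^m is C^(n*m),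
  with basis vector e_i (x) f_j identified with the basis vector of index i*m+j.\<close>

definition adj :: "complex mat \<Rightarrow> complex mat" where
  "adj A = mat (dim_col A) (dim_row A) (\<lambda>(i,j). cnj (A $$ (j,i)))"

definition hermitian :: "complex mat \<Rightarrow> bool" where
  "hermitian A \<longleftrightarrow> adj A = A"

definition psd :: "nat \<Rightarrow> complex mat \<Rightarrow> bool" where
  "psd n A \<longleftrightarrow> A \<in> carrier_mat n n \<and> hermitian A \<and>
     (\<forall>v \<in> carrier_vec n. Im (scalar_prod (conjugate v) (A *\<^sub>v v)) = 0 \<and> 0 \<le> Re (scalar_prod (conjugate v) (A *\<^sub>v v)))"

definition mtrace :: "complex mat \<Rightarrow> complex" where
  "mtrace A = (\<Sum>i<dim_row A. A $$ (i,i))"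

definition density_op :: "nat \<Rightarrow> complex mat \<Rightarrow> bool" where
  "density_op n \<rho> \<longleftrightarrow> psd n \<rho> \<and> mtrace \<rho> = 1"

definition msum :: "nat \<Rightarrow> 'b set \<Rightarrow> ('b \<Rightarrow> complex mat) \<Rightarrow> complex mat" where
  "msum n B f = mat n n (\<lambda>(i,j). \<Sum>b\<in>B. f b $$ (i,j))"

definition povm :: "nat \<Rightarrow> 'b set \<Rightarrow> ('b \<Rightarrow> complex mat) \<Rightarrow> bool" where
  "povm n B E \<longleftrightarrow> finite B \<and> (\<forall>b\<in>B. psd n (E b)) \<and> msum n B E = 1\<^sub>m n"

definition mat_sqrt :: "complex mat \<Rightarrow> complex mat" where
  "mat_sqrt A = (THE R. psd (dim_row A) R \<and> R * R = A)"

text \<open>von Neumann entropy S(sigma) = -tr[sigma ln sigma] = - sum over the eigenvalues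
  (with algebraic multiplicity, i.e. the roots of the characteristic polynomial) of
  lambda ln lambda, with 0 ln 0 = 0\<close>
definition xlnx :: "real \<Rightarrow> real" where
  "xlnx x = (if x = 0 then 0 else x * ln x)"

definition vn_entropy :: "complex mat \<Rightarrow> real" where
  "vn_entropy \<sigma> = - (\<Sum>x\<in># proots (char_poly \<sigma>). xlnx (Re x))"

definition prob :: "('b \<Rightarrow> complex mat) \<Rightarrow> complex mat \<Rightarrow> 'b \<Rightarrow> real" where
  "prob E \<rho> b = Re (mtrace (E b * \<rho>))"

definition tensor_mat :: "complex mat \<Rightarrow> complex mat \<Rightarrow> complex mat" where
  "tensor_mat A C = mat (dim_row A * dim_row C) (dim_col A * dim_col C)
     (\<lambda>(r,c). A $$ (r div dim_row C, c div dim_col C) * C $$ (r mod dim_row C, c mod dim_col C))"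

definition proj :: "complex vec \<Rightarrow> complex mat" where
  "proj \<psi> = mat (dim_vec \<psi>) (dim_vec \<psi>) (\<lambda>(i,j). \<psi> $ i * cnj (\<psi> $ j))"

definition ptrace_R :: "nat \<Rightarrow> nat \<Rightarrow> complex mat \<Rightarrow> complex mat" where
  "ptrace_R n m M = mat n n (\<lambda>(i,k). \<Sum>j<m. M $$ (i*m+j, k*m+j))"

definition ptrace_S :: "nat \<Rightarrow> nat \<Rightarrow> complex mat \<Rightarrow> complex mat" where
  "ptrace_S n m M = mat m m (\<lambda>(j,l). \<Sum>i<n. M $$ (i*m+j, i*m+l))"

end

theory Submission
  imports Defs "Jordan_Normal_Form.Schur_Decomposition"
begin


lemma adj_carrier[simp]: "A \<in> carrier_mat a b \<Longrightarrow> adj A \<in> carrier_mat b a"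
  unfolding adj_def by auto
lemma adj_dims[simp]: "dim_row (adj A) = dim_col A" "dim_col (adj A) = dim_row A"
  unfolding adj_def by auto
lemma adj_index[simp]: "i < dim_col A \<Longrightarrow> j < dim_row A \<Longrightarrow> adj A $$ (i,j) = cnj (A $$ (j,i))"
  unfolding adj_def by auto

lemma cscalar_self_real: "(w::complex vec) \<bullet>c w = of_real (Re (w \<bullet>c w))"
  using conjugate_square_ge_0_vec[of w] by (auto simp: less_eq_complex_def complex_eq_iff)

lemma onb_exists:
  assumes v: "v \<in> carrier_vec n" and v0: "v \<noteq> 0\<^sub>v n"
  shows "\<exists>W c. W \<in> carrier_mat n n \<and> adj W * W = 1\<^sub>m n \<and> col W 0 = c \<cdot>\<^sub>v v"
proof -
  interpret cof_vec_space n "TYPE(complex)" .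
  define b where "b = basis_completion v"
  define ws where "ws = gram_schmidt n b"
  from basis_completion[OF v v0, folded b_def]
  have dist_b: "distinct b" and indep: "\<not> lin_dep (set b)" and b: "set b \<subseteq> carrier_vec n"
    and hdb: "hd b = v" and len_b: "length b = n" by auto
  have n: "n \<noteq> 0" using v v0 by auto
  from hdb len_b n obtain vs where bv: "b = v # vs" by (cases b, auto)
  from gram_schmidt_result[OF b dist_b indep refl, folded ws_def]
  have wsc: "set ws \<subseteq> carrier_vec n" and orth: "corthogonal ws" and len: "length ws = n"
    by (auto simp: len_b)
  from gram_schmidt_hd[OF v, of vs, folded bv] have hdws: "hd ws = v" unfolding ws_def .
  have ws0: "ws ! 0 = v" using hdws n len by (cases ws, auto)
  define r where "r = (\<lambda>i. Re (ws ! i \<bullet>c ws ! i))"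
  define c where "c = (\<lambda>i. complex_of_real (1 / sqrt (r i)))"
  have wsi: "ws ! i \<in> carrier_vec n" if "i < n" for i using wsc len that by auto
  have rpos: "r i > 0" if i: "i < n" for i
  proof -
    have "ws ! i \<bullet>c ws ! i \<noteq> 0" using corthogonalD[OF orth, of i i] i len by auto
    moreover have "ws ! i \<bullet>c ws ! i \<ge> 0" by (rule conjugate_square_ge_0_vec)
    ultimately show ?thesis unfolding r_def by (auto simp: less_eq_complex_def complex_eq_iff)
  qed
  define W where "W = mat n n (\<lambda>(k,i). c i * ws ! i $ k)"
  have W: "W \<in> carrier_mat n n" unfolding W_def by auto
  have "adj W * W = 1\<^sub>m n"
  proof (rule eq_matI)
    fix i j assume "i < dim_row (1\<^sub>m n)" "j < dim_col (1\<^sub>m n)"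
    hence i: "i < n" and j: "j < n" by auto
    have "(adj W * W) $$ (i,j) = (\<Sum>k<n. cnj (c i * ws ! i $ k) * (c j * ws ! j $ k))"
      using i j W by (auto simp: W_def scalar_prod_def atLeast0LessThan intro!: sum.cong)
    also have "\<dots> = cnj (c i) * c j * (ws ! j \<bullet>c ws ! i)"
      using wsi[OF i] wsi[OF j]
      by (auto simp: scalar_prod_def sum_distrib_left atLeast0LessThan ac_simps intro!: sum.cong)
    also have "\<dots> = 1\<^sub>m n $$ (i,j)"
    proof (cases "i = j")
      case True
      have "cnj (c i) * c i * (ws ! i \<bullet>c ws ! i) = cnj (c i) * c i * of_real (r i)"
        unfolding r_def by (subst cscalar_self_real, simp)
      also have "\<dots> = 1" using rpos[OF i] unfolding c_def
        by (simp add: of_real_mult[symmetric] del: of_real_mult)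
      finally show ?thesis using True i by simp
    next
      case False
      hence "ws ! j \<bullet>c ws ! i = 0" using corthogonalD[OF orth, of j i] i j len by auto
      thus ?thesis using False i j by simp
    qed
    finally show "(adj W * W) $$ (i,j) = 1\<^sub>m n $$ (i,j)" .
  qed (insert W, auto)
  moreover have "col W 0 = c 0 \<cdot>\<^sub>v v"
    using n v ws0 unfolding W_def by (auto simp: col_def)
  ultimately show ?thesis using W by blast
qed


lemma adj_adj[simp]: "adj (adj A) = A"
  by (rule eq_matI, auto)

lemma adj_mult: assumes "A \<in> carrier_mat a b" "B \<in> carrier_mat b c"
  shows "adj (A * B) = adj B * adj A"
  by (rule eq_matI, insert assms, auto simp: scalar_prod_def cnj_sum mult.commute)

lemma adj_one[simp]: "adj (1\<^sub>m n) = 1\<^sub>m n"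
  by (rule eq_matI, auto)

lemma adj_four_block: assumes "A \<in> carrier_mat a a" "B \<in> carrier_mat a d" "C \<in> carrier_mat d a" "D \<in> carrier_mat d d"
  shows "adj (four_block_mat A B C D) = four_block_mat (adj A) (adj C) (adj B) (adj D)"
  by (rule eq_matI, insert assms, auto)

lemma unitary_right: "U \<in> carrier_mat n n \<Longrightarrow> adj U * U = 1\<^sub>m n \<Longrightarrow> U * adj U = 1\<^sub>m n"
  using mat_mult_left_right_inverse[of "adj U" n U] by auto

theorem spectral:
  assumes "A \<in> carrier_mat n n" "hermitian A"
  shows "\<exists>U D. U \<in> carrier_mat n n \<and> adj U * U = 1\<^sub>m n \<and> D \<in> carrier_mat n n \<and> diagonal_mat D
     \<and> A = U * D * adj U"
  using assms
proof (induction n arbitrary: A)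
  case 0
  thus ?case by (intro exI[of _ "1\<^sub>m 0"] exI[of _ "0\<^sub>m 0 0"], auto simp: diagonal_mat_def intro!: eq_matI)
next
  case (Suc k A)
  let ?n = "Suc k"
  have A: "A \<in> carrier_mat ?n ?n" and hA: "adj A = A" using Suc.prems by (auto simp: hermitian_def)
  obtain as where cp: "char_poly A = (\<Prod>a\<leftarrow>as. [:- a, 1:])" and las: "length as = ?n"
    using char_poly_factorized[OF A] by blast
  then obtain e es where as: "as = e # es" by (cases as, auto)
  have "poly (char_poly A) e = 0" unfolding cp as by simp
  hence "eigenvalue A e" using eigenvalue_root_char_poly[OF A] by simp
  then obtain v where v: "v \<in> carrier_vec ?n" and v0: "v \<noteq> 0\<^sub>v ?n" and Av: "A *\<^sub>v v = e \<cdot>\<^sub>v v"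
    unfolding eigenvalue_def eigenvector_def using A by auto
  obtain W c where W: "W \<in> carrier_mat ?n ?n" and WW: "adj W * W = 1\<^sub>m ?n" and cW: "col W 0 = c \<cdot>\<^sub>v v"
    using onb_exists[OF v v0] by blast
  have WW': "W * adj W = 1\<^sub>m ?n" using unitary_right[OF W WW] .
  have aW: "adj W \<in> carrier_mat ?n ?n" using W by simp
  define A' where "A' = adj W * A * W"
  have A': "A' \<in> carrier_mat ?n ?n" unfolding A'_def using W A by auto
  have aWA: "adj W * A \<in> carrier_mat ?n ?n" using aW A by simp
  have hA': "adj A' = A'" unfolding A'_def
    using adj_mult[OF aWA W] adj_mult[OF aW A] W A hA
    by (simp add: assoc_mult_mat[OF aW A W])
  have Au0: "A *\<^sub>v col W 0 = e \<cdot>\<^sub>v col W 0"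
    unfolding cW using mult_mat_vec[OF A v] Av by (simp add: smult_smult_assoc mult.commute)
  have col0: "A' $$ (i,0) = (if i = 0 then e else 0)" if i: "i < ?n" for i
  proof -
    have "A' $$ (i,0) = (adj W * (A * W)) $$ (i,0)" unfolding A'_def using assoc_mult_mat[OF aW A W] by simp
    also have "\<dots> = row (adj W) i \<bullet> col (A * W) 0" using i W A by simp
    also have "col (A * W) 0 = A *\<^sub>v col W 0" using col_mult2[OF A W] by simp
    also have "row (adj W) i \<bullet> (A *\<^sub>v col W 0) = e * (row (adj W) i \<bullet> col W 0)"
      unfolding Au0 using W by (simp add: scalar_prod_smult_right)
    also have "row (adj W) i \<bullet> col W 0 = (adj W * W) $$ (i,0)" using i W by simp
    also have "\<dots> = (if i = 0 then 1 else 0)" unfolding WW using i by simp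
    finally show ?thesis by simp
  qed
  have A'ij: "A' $$ (i,j) = cnj (A' $$ (j,i))" if "i < ?n" "j < ?n" for i j
  proof -
    have "A' $$ (i,j) = adj A' $$ (i,j)" using hA' by simp
    thus ?thesis using that A' by simp
  qed
  have ereal: "cnj e = e" using A'ij[of 0 0] col0[of 0] by simp
  define A3 where "A3 = mat k k (\<lambda>(i,j). A' $$ (Suc i, Suc j))"
  have A3: "A3 \<in> carrier_mat k k" unfolding A3_def by simp
  have hA3: "hermitian A3" unfolding hermitian_def
  proof (rule eq_matI)
    fix i j assume "i < dim_row A3" "j < dim_col A3"
    hence i: "i < k" and j: "j < k" using A3 by auto
    have "A' $$ (Suc j, Suc i) = cnj (A' $$ (Suc i, Suc j))" using A'ij[of "Suc j" "Suc i"] i j by simp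
    thus "adj A3 $$ (i, j) = A3 $$ (i, j)" using i j by (simp add: A3_def)
  qed (insert A3, auto)
  define E1 where "E1 = mat 1 1 (\<lambda>_. e)"
  have A'block: "A' = four_block_mat E1 (0\<^sub>m 1 k) (0\<^sub>m k 1) A3"
  proof (rule eq_matI)
    fix i j assume ij: "i < dim_row (four_block_mat E1 (0\<^sub>m 1 k) (0\<^sub>m k 1) A3)"
       "j < dim_col (four_block_mat E1 (0\<^sub>m 1 k) (0\<^sub>m k 1) A3)"
    hence i: "i < ?n" and j: "j < ?n" by (auto simp: E1_def A3_def)
    show "A' $$ (i, j) = four_block_mat E1 (0\<^sub>m 1 k) (0\<^sub>m k 1) A3 $$ (i, j)"
    proof (cases "i = 0 \<or> j = 0")
      case True
      show ?thesis
      proof (cases "j = 0")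
        case True
        thus ?thesis using col0[OF i] i by (cases i, auto simp: E1_def A3_def)
      next
        case False
        hence i0: "i = 0" using \<open>i = 0 \<or> j = 0\<close> by simp
        have "A' $$ (i,j) = cnj (A' $$ (j,i))" by (rule A'ij[OF i j])
        also have "A' $$ (j,i) = 0" using col0[OF j] False i0 by simp
        finally show ?thesis using i0 False j by (auto simp: E1_def A3_def)
      qed
    next
      case False
      then obtain i' j' where "i = Suc i'" "j = Suc j'" by (cases i; cases j, auto)
      thus ?thesis using i j by (auto simp: E1_def A3_def)
    qed
  qed (insert A', auto simp: E1_def A3_def)
  from Suc.IH[OF A3 hA3] obtain U3 D3 where U3: "U3 \<in> carrier_mat k k" and UU3: "adj U3 * U3 = 1\<^sub>m k"
    and D3: "D3 \<in> carrier_mat k k" and dD3: "diagonal_mat D3" and A3eq: "A3 = U3 * D3 * adj U3" by blast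
  define P where "P = four_block_mat (1\<^sub>m 1) (0\<^sub>m 1 k) (0\<^sub>m k 1) U3"
  define D where "D = four_block_mat E1 (0\<^sub>m 1 k) (0\<^sub>m k 1) D3"
  have E1: "E1 \<in> carrier_mat 1 1" unfolding E1_def by simp
  have P: "P \<in> carrier_mat ?n ?n" unfolding P_def using four_block_carrier_mat[OF _ U3, of "1\<^sub>m 1" 1 1] by simp
  have D: "D \<in> carrier_mat ?n ?n" unfolding D_def using four_block_carrier_mat[OF E1 D3] by simp
  have aP: "adj P = four_block_mat (1\<^sub>m 1) (0\<^sub>m 1 k) (0\<^sub>m k 1) (adj U3)"
    unfolding P_def by (subst adj_four_block, insert U3, auto)
  have aU3: "adj U3 \<in> carrier_mat k k" using U3 by simp
  have "adj P * P = four_block_mat (1\<^sub>m 1 * 1\<^sub>m 1 + 0\<^sub>m 1 k * 0\<^sub>m k 1) (1\<^sub>m 1 * 0\<^sub>m 1 k + 0\<^sub>m 1 k * U3)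
     (0\<^sub>m k 1 * 1\<^sub>m 1 + adj U3 * 0\<^sub>m k 1) (0\<^sub>m k 1 * 0\<^sub>m 1 k + adj U3 * U3)"
    unfolding aP unfolding P_def by (rule mult_four_block_mat, insert U3 aU3, auto)
  also have "\<dots> = four_block_mat (1\<^sub>m 1) (0\<^sub>m 1 k) (0\<^sub>m k 1) (1\<^sub>m k)"
    using U3 aU3 UU3 by simp
  also have "\<dots> = 1\<^sub>m ?n" using four_block_one_mat[of 1 k] by simp
  finally have PP: "adj P * P = 1\<^sub>m ?n" .
  have "P * D = four_block_mat (1\<^sub>m 1 * E1 + 0\<^sub>m 1 k * 0\<^sub>m k 1) (1\<^sub>m 1 * 0\<^sub>m 1 k + 0\<^sub>m 1 k * D3)
     (0\<^sub>m k 1 * E1 + U3 * 0\<^sub>m k 1) (0\<^sub>m k 1 * 0\<^sub>m 1 k + U3 * D3)"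
    unfolding P_def D_def by (rule mult_four_block_mat, insert U3 D3 E1, auto)
  also have "\<dots> = four_block_mat E1 (0\<^sub>m 1 k) (0\<^sub>m k 1) (U3 * D3)"
    using U3 D3 E1 by simp
  finally have PD: "P * D = four_block_mat E1 (0\<^sub>m 1 k) (0\<^sub>m k 1) (U3 * D3)" .
  have UD3: "U3 * D3 \<in> carrier_mat k k" using U3 D3 by simp
  have UDU: "U3 * D3 * adj U3 \<in> carrier_mat k k" using UD3 aU3 by (rule mult_carrier_mat)
  have "P * D * adj P = four_block_mat (E1 * 1\<^sub>m 1 + 0\<^sub>m 1 k * 0\<^sub>m k 1) (E1 * 0\<^sub>m 1 k + 0\<^sub>m 1 k * adj U3)
     (0\<^sub>m k 1 * 1\<^sub>m 1 + (U3 * D3) * 0\<^sub>m k 1) (0\<^sub>m k 1 * 0\<^sub>m 1 k + (U3 * D3) * adj U3)"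
    unfolding PD aP by (rule mult_four_block_mat, insert UD3 aU3 E1, auto)
  also have "\<dots> = four_block_mat E1 (0\<^sub>m 1 k) (0\<^sub>m k 1) (U3 * D3 * adj U3)"
    using UD3 aU3 E1 U3 D3 left_add_zero_mat[OF UDU]
    by (simp add: left_mult_zero_mat' right_mult_zero_mat')
  finally have PDP: "P * D * adj P = A'" unfolding A'block A3eq .
  define U where "U = W * P"
  have U: "U \<in> carrier_mat ?n ?n" unfolding U_def using W P by auto
  have aU: "adj U = adj P * adj W" unfolding U_def using adj_mult[OF W P] .
  have aPc: "adj P \<in> carrier_mat ?n ?n" using P by simp
  have "adj U * U = adj P * (adj W * (W * P))" unfolding aU unfolding U_def
    using assoc_mult_mat[OF aPc aW, of "W * P" ?n] W P by simp
  also have "adj W * (W * P) = P" using assoc_mult_mat[OF aW W P] WW P by simp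
  finally have UU: "adj U * U = 1\<^sub>m ?n" using PP by simp
  have PDc: "P * D \<in> carrier_mat ?n ?n" using P D by simp
  have AW: "A * W \<in> carrier_mat ?n ?n" using A W by simp
  have "U * D * adj U = W * (P * D) * (adj P * adj W)" unfolding aU unfolding U_def
    using assoc_mult_mat[OF W P D] by simp
  also have "\<dots> = W * ((P * D) * (adj P * adj W))"
    using assoc_mult_mat[OF W PDc, of "adj P * adj W" ?n] aPc aW by simp
  also have "(P * D) * (adj P * adj W) = A' * adj W"
    using assoc_mult_mat[OF PDc aPc aW] PDP by simp
  also have "W * (A' * adj W) = (W * A') * adj W" using assoc_mult_mat[OF W A' aW] by simp
  also have "W * A' = A * W"
  proof -
    have "W * A' = W * (adj W * (A * W))" unfolding A'_def using assoc_mult_mat[OF aW A W] by simp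
    also have "\<dots> = (W * adj W) * (A * W)" using assoc_mult_mat[OF W aW AW] by simp
    finally show ?thesis using WW' left_mult_one_mat[OF AW] by simp
  qed
  also have "A * W * adj W = A" using assoc_mult_mat[OF A W aW] WW' right_mult_one_mat[OF A] by simp
  finally have "A = U * D * adj U" ..
  moreover have "diagonal_mat D" using dD3 D3 unfolding D_def diagonal_mat_def E1_def
    by (auto simp: index_mat_four_block)
  ultimately show ?case using U UU D by blast
qed


definition qf :: "complex mat \<Rightarrow> complex vec \<Rightarrow> complex" where
  "qf A v = conjugate v \<bullet> (A *\<^sub>v v)"

lemma adj_vec: assumes B: "B \<in> carrier_mat n k" and v: "v \<in> carrier_vec n" and z: "z \<in> carrier_vec k"
  shows "conjugate v \<bullet> (B *\<^sub>v z) = conjugate (adj B *\<^sub>v v) \<bullet> z"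
proof -
  have "conjugate v \<bullet> (B *\<^sub>v z) = (\<Sum>i<n. cnj (v $ i) * (\<Sum>j<k. B $$ (i,j) * z $ j))"
    using B v z by (auto simp: scalar_prod_def mult_mat_vec_def atLeast0LessThan intro!: sum.cong)
  also have "\<dots> = (\<Sum>j<k. \<Sum>i<n. cnj (v $ i) * B $$ (i,j) * z $ j)"
    by (simp add: sum_distrib_left sum.swap[of _ "{..<k}"] ac_simps)
  also have "\<dots> = conjugate (adj B *\<^sub>v v) \<bullet> z"
    using B v z by (auto simp: scalar_prod_def mult_mat_vec_def atLeast0LessThan cnj_sum sum_distrib_right sum_distrib_left ac_simps intro!: sum.cong)
  finally show ?thesis .
qed

lemma diag_mult_vec: assumes D: "D \<in> carrier_mat n n" "diagonal_mat D" and w: "w \<in> carrier_vec n"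
  shows "D *\<^sub>v w = vec n (\<lambda>i. D $$ (i,i) * w $ i)"
proof (rule eq_vecI)
  fix i assume "i < dim_vec (vec n (\<lambda>i. D $$ (i,i) * w $ i))"
  hence i: "i < n" by simp
  have "(D *\<^sub>v w) $ i = (\<Sum>j\<in>{0..<n}. D $$ (i,j) * w $ j)"
    using D w i by (auto simp: mult_mat_vec_def scalar_prod_def)
  also have "\<dots> = (\<Sum>j\<in>{0..<n}. if j = i then D $$ (i,i) * w $ i else 0)"
    using D i by (intro sum.cong refl) (auto simp: diagonal_mat_def)
  also have "\<dots> = D $$ (i,i) * w $ i" using i by (simp add: sum.delta')
  finally show "(D *\<^sub>v w) $ i = vec n (\<lambda>i. D $$ (i,i) * w $ i) $ i" using i by simp
qed (insert D w, auto)

lemma qf_UDU: assumes U: "U \<in> carrier_mat n n" and D: "D \<in> carrier_mat n n" "diagonal_mat D" 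
  and v: "v \<in> carrier_vec n"
  shows "qf (U * D * adj U) v = (\<Sum>i<n. D $$ (i,i) * (cnj ((adj U *\<^sub>v v) $ i) * (adj U *\<^sub>v v) $ i))"
proof -
  define w where "w = adj U *\<^sub>v v"
  have w: "w \<in> carrier_vec n" unfolding w_def using adj_carrier[OF U] v by (rule mult_mat_vec_carrier)
  have aU: "adj U \<in> carrier_mat n n" using U by simp
  have "(U * D * adj U) *\<^sub>v v = U *\<^sub>v (D *\<^sub>v w)"
  proof -
    have UD: "U * D \<in> carrier_mat n n" using U D by simp
    have "(U * D * adj U) *\<^sub>v v = (U * D) *\<^sub>v w" unfolding w_def by (rule assoc_mult_mat_vec[OF UD aU v])
    also have "\<dots> = U *\<^sub>v (D *\<^sub>v w)" by (rule assoc_mult_mat_vec[OF U D(1) w])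
    finally show ?thesis .
  qed
  hence "qf (U * D * adj U) v = conjugate (adj U *\<^sub>v v) \<bullet> (D *\<^sub>v w)"
    unfolding qf_def using adj_vec[OF U v, of "D *\<^sub>v w"] D w by simp
  also have "\<dots> = conjugate w \<bullet> vec n (\<lambda>i. D $$ (i,i) * w $ i)" unfolding w_def[symmetric]
    using diag_mult_vec[OF D w] by simp
  also have "\<dots> = (\<Sum>i<n. D $$ (i,i) * (cnj (w $ i) * w $ i))"
    using w by (auto simp: scalar_prod_def atLeast0LessThan ac_simps intro!: sum.cong)
  finally show ?thesis unfolding w_def .
qed

lemma cnj_mult_self: "cnj z * z = of_real ((cmod z)^2)"
  by (metis complex_norm_square mult.commute)

lemma psd_hermitian: "psd n A \<Longrightarrow> hermitian A" unfolding psd_def by auto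

lemma psd_decomp: assumes "psd n A"
  shows "\<exists>U D. U \<in> carrier_mat n n \<and> adj U * U = 1\<^sub>m n \<and> D \<in> carrier_mat n n \<and> diagonal_mat D
     \<and> A = U * D * adj U \<and> (\<forall>i<n. D $$ (i,i) = of_real (Re (D $$ (i,i))) \<and> Re (D $$ (i,i)) \<ge> 0)"
proof -
  have A: "A \<in> carrier_mat n n" using assms unfolding psd_def by auto
  obtain U D where U: "U \<in> carrier_mat n n" and UU: "adj U * U = 1\<^sub>m n" and D: "D \<in> carrier_mat n n"
    and dD: "diagonal_mat D" and AD: "A = U * D * adj U"
    using spectral[OF A psd_hermitian[OF assms]] by blast
  have "D $$ (i,i) = of_real (Re (D $$ (i,i))) \<and> Re (D $$ (i,i)) \<ge> 0" if i: "i < n" for i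
  proof -
    define x where "x = U *\<^sub>v unit_vec n i"
    have x: "x \<in> carrier_vec n" unfolding x_def using U by simp
    have ax: "adj U *\<^sub>v x = unit_vec n i" unfolding x_def
      using assoc_mult_mat_vec[of "adj U" n n U n "unit_vec n i"] U UU by simp
    have "qf A x = (\<Sum>j<n. D $$ (j,j) * (cnj (unit_vec n i $ j) * unit_vec n i $ j))"
      unfolding AD using qf_UDU[OF U D dD x] ax by simp
    also have "\<dots> = (\<Sum>j<n. if j = i then D $$ (i,i) else 0)"
      by (rule sum.cong, auto simp: unit_vec_def)
    also have "\<dots> = D $$ (i,i)" using i by (simp add: sum.delta')
    finally have "qf A x = D $$ (i,i)" .
    moreover have "Im (qf A x) = 0 \<and> Re (qf A x) \<ge> 0" using assms x unfolding psd_def qf_def by auto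
    ultimately show ?thesis by (auto simp: complex_eq_iff)
  qed
  thus ?thesis using U UU D dD AD by blast
qed


lemma unitary_conj_mult: assumes U: "U \<in> carrier_mat n n" and UU: "adj U * U = 1\<^sub>m n"
  and X: "X \<in> carrier_mat n n" and Y: "Y \<in> carrier_mat n n"
  shows "(U * X * adj U) * (U * Y * adj U) = U * (X * Y) * adj U"
proof -
  have aU: "adj U \<in> carrier_mat n n" using U by simp
  have UX: "U * X \<in> carrier_mat n n" using U X by simp
  have UY: "U * Y \<in> carrier_mat n n" using U Y by simp
  have UYa: "U * Y * adj U \<in> carrier_mat n n" using UY aU by simp
  have "(U * X * adj U) * (U * Y * adj U) = (U * X) * (adj U * (U * Y * adj U))"
    by (rule assoc_mult_mat[OF UX aU UYa])
  also have "adj U * (U * Y * adj U) = Y * adj U"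
  proof -
    have "adj U * (U * Y * adj U) = adj U * (U * Y) * adj U" using assoc_mult_mat[OF aU UY aU] by simp
    also have "adj U * (U * Y) = Y" using assoc_mult_mat[OF aU U Y] UU Y by simp
    finally show ?thesis .
  qed
  also have "(U * X) * (Y * adj U) = U * (X * Y) * adj U"
    using assoc_mult_mat[OF UX Y aU] assoc_mult_mat[OF U X Y] by simp
  finally show ?thesis .
qed

lemma adj_conj: assumes U: "U \<in> carrier_mat n n" and X: "X \<in> carrier_mat n n"
  shows "adj (U * X * adj U) = U * adj X * adj U"
proof -
  have UX: "U * X \<in> carrier_mat n n" using U X by simp
  have "adj (U * X * adj U) = U * adj (U * X)" using adj_mult[OF UX adj_carrier[OF U]] by simp
  also have "adj (U * X) = adj X * adj U" by (rule adj_mult[OF U X])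
  finally show ?thesis using assoc_mult_mat[OF U adj_carrier[OF X] adj_carrier[OF U]] by simp
qed

lemma psd_sqrt_exists: assumes E: "psd n E"
  shows "\<exists>R. psd n R \<and> R * R = E"
proof -
  obtain U D where U: "U \<in> carrier_mat n n" and UU: "adj U * U = 1\<^sub>m n" and D: "D \<in> carrier_mat n n"
    and dD: "diagonal_mat D" and ED: "E = U * D * adj U"
    and dr: "\<And>i. i < n \<Longrightarrow> D $$ (i,i) = of_real (Re (D $$ (i,i))) \<and> Re (D $$ (i,i)) \<ge> 0"
    using psd_decomp[OF E] by blast
  have drn: "\<And>i. i < n \<Longrightarrow> Re (D $$ (i,i)) \<ge> 0" using dr by blast
  define s where "s = (\<lambda>i. sqrt (Re (D $$ (i,i))))"
  define S where "S = mat n n (\<lambda>(i,j). if i = j then complex_of_real (s i) else 0)"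
  have S: "S \<in> carrier_mat n n" unfolding S_def by simp
  have dS: "diagonal_mat S" unfolding S_def diagonal_mat_def by simp
  have SS: "S * S = D"
  proof (rule eq_matI)
    fix i j assume "i < dim_row D" "j < dim_col D"
    hence i: "i < n" and j: "j < n" using D by auto
    have "(S * S) $$ (i,j) = (\<Sum>k\<in>{0..<n}. (if i = k then complex_of_real (s i) else 0) * (if k = j then complex_of_real (s k) else 0))"
      using i j by (auto simp: S_def scalar_prod_def intro!: sum.cong)
    also have "\<dots> = (\<Sum>k\<in>{0..<n}. if k = i then (if i = j then complex_of_real (s i * s i) else 0) else 0)"
      by (rule sum.cong, auto)
    also have "\<dots> = (if i = j then complex_of_real (s i * s i) else 0)" using i by (simp add: sum.delta')
    also have "\<dots> = D $$ (i,j)"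
    proof (cases "i = j")
      case True
      have "s i * s i = Re (D $$ (i,i))" unfolding s_def using dr[OF i] by simp
      thus ?thesis using True dr[OF i] by simp
    next
      case False thus ?thesis using dD D i j by (auto simp: diagonal_mat_def)
    qed
    finally show "(S * S) $$ (i,j) = D $$ (i,j)" .
  qed (insert D S, auto)
  define R where "R = U * S * adj U"
  have R: "R \<in> carrier_mat n n" unfolding R_def using mult_carrier_mat[OF mult_carrier_mat[OF U S] adj_carrier[OF U]] .
  have RR: "R * R = E" unfolding R_def ED using unitary_conj_mult[OF U UU S S] SS by simp
  have aS: "adj S = S" unfolding S_def by (rule eq_matI, auto)
  have hR: "hermitian R" unfolding hermitian_def R_def using adj_conj[OF U S] aS by simp
  have "Im (qf R v) = 0 \<and> 0 \<le> Re (qf R v)" if v: "v \<in> carrier_vec n" for v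
  proof -
    define w where "w = adj U *\<^sub>v v"
    have "qf R v = (\<Sum>i<n. S $$ (i,i) * (cnj (w $ i) * w $ i))"
      unfolding R_def w_def by (rule qf_UDU[OF U S dS v])
    also have "\<dots> = (\<Sum>i<n. complex_of_real (s i * (cmod (w $ i))^2))"
      by (rule sum.cong, auto simp: S_def cnj_mult_self)
    also have "\<dots> = complex_of_real (\<Sum>i<n. s i * (cmod (w $ i))^2)" by simp
    finally have "qf R v = complex_of_real (\<Sum>i<n. s i * (cmod (w $ i))^2)" .
    moreover have "(\<Sum>i<n. s i * (cmod (w $ i))^2) \<ge> 0" unfolding s_def
      by (intro sum_nonneg mult_nonneg_nonneg, auto simp: drn)
    ultimately show ?thesis by simp
  qed
  hence "psd n R" using R hR unfolding psd_def qf_def by auto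
  thus ?thesis using RR by blast
qed

lemma psd_q0: assumes R: "psd n R" and v: "v \<in> carrier_vec n" and q: "qf R v = 0"
  shows "R *\<^sub>v v = 0\<^sub>v n"
proof -
  obtain U D where U: "U \<in> carrier_mat n n" and UU: "adj U * U = 1\<^sub>m n" and D: "D \<in> carrier_mat n n"
    and dD: "diagonal_mat D" and RD: "R = U * D * adj U"
    and dr: "\<And>i. i < n \<Longrightarrow> D $$ (i,i) = of_real (Re (D $$ (i,i))) \<and> Re (D $$ (i,i)) \<ge> 0"
    using psd_decomp[OF R] by blast
  have drn: "\<And>i. i < n \<Longrightarrow> Re (D $$ (i,i)) \<ge> 0" using dr by blast
  define w where "w = adj U *\<^sub>v v"
  have aU: "adj U \<in> carrier_mat n n" using U by simp
  have w: "w \<in> carrier_vec n" unfolding w_def using aU v by (rule mult_mat_vec_carrier)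
  have "qf R v = (\<Sum>i<n. D $$ (i,i) * (cnj (w $ i) * w $ i))"
    unfolding RD w_def by (rule qf_UDU[OF U D dD v])
  also have "\<dots> = (\<Sum>i<n. complex_of_real (Re (D $$ (i,i)) * (cmod (w $ i))^2))"
  proof (rule sum.cong[OF refl])
    fix i assume "i \<in> {..<n}"
    hence "D $$ (i,i) = of_real (Re (D $$ (i,i)))" using dr by auto
    thus "D $$ (i,i) * (cnj (w $ i) * w $ i) = complex_of_real (Re (D $$ (i,i)) * (cmod (w $ i))^2)"
      by (metis cnj_mult_self of_real_mult)
  qed
  also have "\<dots> = complex_of_real (\<Sum>i<n. Re (D $$ (i,i)) * (cmod (w $ i))^2)" by simp
  finally have qe: "qf R v = complex_of_real (\<Sum>i<n. Re (D $$ (i,i)) * (cmod (w $ i))^2)" .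
  have "(\<Sum>i<n. Re (D $$ (i,i)) * (cmod (w $ i))^2) = 0" by (metis q qe of_real_eq_0_iff)
  hence z: "\<forall>i\<in>{..<n}. Re (D $$ (i,i)) * (cmod (w $ i))^2 = 0"
    by (subst sum_nonneg_eq_0_iff[symmetric], auto intro!: mult_nonneg_nonneg drn)
  have Dw: "D *\<^sub>v w = 0\<^sub>v n"
  proof -
    have "D *\<^sub>v w = vec n (\<lambda>i. D $$ (i,i) * w $ i)" by (rule diag_mult_vec[OF D dD w])
    also have "\<dots> = 0\<^sub>v n"
    proof (rule eq_vecI)
      fix i assume "i < dim_vec (0\<^sub>v n :: complex vec)"
      hence i: "i < n" by simp
      have "Re (D $$ (i,i)) = 0 \<or> w $ i = 0" using z i by auto
      hence "D $$ (i,i) * w $ i = 0" using dr[OF i] by (metis mult_zero_left mult_zero_right of_real_0)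
      thus "vec n (\<lambda>i. D $$ (i,i) * w $ i) $ i = 0\<^sub>v n $ i" using i by simp
    qed simp
    finally show ?thesis .
  qed
  have UD: "U * D \<in> carrier_mat n n" using U D by simp
  have "R *\<^sub>v v = (U * D) *\<^sub>v w" unfolding RD w_def by (rule assoc_mult_mat_vec[OF UD aU v])
  also have "\<dots> = U *\<^sub>v (D *\<^sub>v w)" by (rule assoc_mult_mat_vec[OF U D w])
  also have "\<dots> = 0\<^sub>v n" unfolding Dw using U by (intro eq_vecI, auto simp: scalar_prod_def)
  finally show ?thesis .
qed


lemma psd_carrier: "psd n A \<Longrightarrow> A \<in> carrier_mat n n" unfolding psd_def by auto

lemma psd_qf: "psd n A \<Longrightarrow> v \<in> carrier_vec n \<Longrightarrow> qf A v = of_real (Re (qf A v)) \<and> Re (qf A v) \<ge> 0"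
  unfolding psd_def qf_def by (auto simp: complex_eq_iff)

lemma adj_minus: "A \<in> carrier_mat n m \<Longrightarrow> B \<in> carrier_mat n m \<Longrightarrow> adj (A - B) = adj A - adj B"
  by (rule eq_matI, auto)

lemma mat_id_lemma: "R \<in> carrier_mat n n \<Longrightarrow> S \<in> carrier_mat n n \<Longrightarrow> R * R - S * S = R * (R - S) + (R - S) * (S::complex mat)"
  by (rule eq_matI, auto simp: scalar_prod_def algebra_simps sum_subtractf sum.distrib)

lemma psd_sqrt_unique: assumes R: "psd n R" and S: "psd n S" and RS: "R * R = S * S"
  shows "R = S"
proof -
  have Rc: "R \<in> carrier_mat n n" and Sc: "S \<in> carrier_mat n n" using R S by (auto simp: psd_carrier)
  have hR: "adj R = R" and hS: "adj S = S" using psd_hermitian[OF R] psd_hermitian[OF S] unfolding hermitian_def by auto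
  define H where "H = R - S"
  have Hc: "H \<in> carrier_mat n n" unfolding H_def
    by (rule carrier_matI, insert Rc Sc, auto)
  have hH: "adj H = H" unfolding H_def adj_minus[OF Rc Sc] hR hS ..
  have mat_id: "R * R - S * S = R * H + H * S" unfolding H_def
    using Rc Sc by (rule mat_id_lemma)
  have hermH: "hermitian H" unfolding hermitian_def by (rule hH)
  obtain U D where U: "U \<in> carrier_mat n n" and UU: "adj U * U = 1\<^sub>m n" and D: "D \<in> carrier_mat n n"
    and dD: "diagonal_mat D" and HD: "H = U * D * adj U"
    using spectral[OF Hc hermH] by blast
  have aU: "adj U \<in> carrier_mat n n" using U by simp
  have d0: "D $$ (i,i) = 0" if i: "i < n" for i
  proof (rule ccontr)
    assume dnz: "D $$ (i,i) \<noteq> 0"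
    define d where "d = D $$ (i,i)"
    define u where "u = U *\<^sub>v unit_vec n i"
    have u: "u \<in> carrier_vec n" unfolding u_def using U by simp
    have au: "adj U *\<^sub>v u = unit_vec n i" unfolding u_def
      using assoc_mult_mat_vec[of "adj U" n n U n "unit_vec n i"] U UU by simp
    have u0: "u \<noteq> 0\<^sub>v n"
    proof
      assume "u = 0\<^sub>v n"
      hence "adj U *\<^sub>v u = 0\<^sub>v n" using aU by (intro eq_vecI, auto simp: scalar_prod_def)
      hence "unit_vec n i = (0\<^sub>v n :: complex vec)" using au by simp
      thus False using i by (metis index_unit_vec(1) index_zero_vec(1) one_neq_zero)
    qed
    have UD: "U * D \<in> carrier_mat n n" using U D by simp
    have Hu: "H *\<^sub>v u = d \<cdot>\<^sub>v u"
    proof -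
      have "H *\<^sub>v u = (U * D) *\<^sub>v (adj U *\<^sub>v u)" unfolding HD by (rule assoc_mult_mat_vec[OF UD aU u])
      also have "\<dots> = U *\<^sub>v (D *\<^sub>v unit_vec n i)" unfolding au by (rule assoc_mult_mat_vec[OF U D], simp)
      also have "D *\<^sub>v unit_vec n i = d \<cdot>\<^sub>v unit_vec n i"
        unfolding diag_mult_vec[OF D dD unit_vec_carrier] d_def by (rule eq_vecI, auto simp: unit_vec_def)
      also have "U *\<^sub>v (d \<cdot>\<^sub>v unit_vec n i) = d \<cdot>\<^sub>v u" unfolding u_def by (rule mult_mat_vec[OF U], simp)
      finally show ?thesis .
    qed
    have qH: "qf H u = d"
    proof -
      have "qf H u = (\<Sum>j<n. D $$ (j,j) * (cnj (unit_vec n i $ j) * unit_vec n i $ j))"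
        unfolding HD using qf_UDU[OF U D dD u] au by simp
      also have "\<dots> = (\<Sum>j<n. if j = i then D $$ (i,i) else 0)"
        by (rule sum.cong, auto simp: unit_vec_def)
      also have "\<dots> = d" using i by (simp add: sum.delta' d_def)
      finally show ?thesis .
    qed
    have qR: "qf R u = of_real (Re (qf R u))" "Re (qf R u) \<ge> 0" using psd_qf[OF R u] by auto
    have qS: "qf S u = of_real (Re (qf S u))" "Re (qf S u) \<ge> 0" using psd_qf[OF S u] by auto
    have Ru: "R *\<^sub>v u \<in> carrier_vec n" and Su: "S *\<^sub>v u \<in> carrier_vec n" using Rc Sc u by auto
    have cu: "conjugate u \<in> carrier_vec n" using u by simp
    have "qf H u = qf R u - qf S u" unfolding qf_def H_def
      using minus_mult_distrib_mat_vec[OF Rc Sc u] scalar_prod_minus_distrib[OF cu Ru Su] by simp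
    hence dreal: "cnj d = d" using qH qR qS by (metis complex_cnj_complex_of_real complex_cnj_diff)
    have "0 = conjugate u \<bullet> ((R * R - S * S) *\<^sub>v u)"
      unfolding RS using Sc u by (simp add: scalar_prod_def)
    also have "(R * R - S * S) *\<^sub>v u = (R * H) *\<^sub>v u + (H * S) *\<^sub>v u"
      unfolding mat_id using add_mult_distrib_mat_vec[of "R * H" n n "H * S" u] Rc Sc Hc u by simp
    also have "conjugate u \<bullet> \<dots> = conjugate u \<bullet> ((R * H) *\<^sub>v u) + conjugate u \<bullet> ((H * S) *\<^sub>v u)"
      by (rule scalar_prod_add_distrib[OF cu], insert Rc Sc Hc u, auto)
    also have "conjugate u \<bullet> ((R * H) *\<^sub>v u) = d * qf R u"
    proof -
      have "(R * H) *\<^sub>v u = R *\<^sub>v (d \<cdot>\<^sub>v u)" using assoc_mult_mat_vec[OF Rc Hc u] Hu by simp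
      also have "\<dots> = d \<cdot>\<^sub>v (R *\<^sub>v u)" by (rule mult_mat_vec[OF Rc u])
      finally show ?thesis unfolding qf_def using scalar_prod_smult_distrib[OF cu Ru] by simp
    qed
    also have "conjugate u \<bullet> ((H * S) *\<^sub>v u) = d * qf S u"
    proof -
      have "conjugate u \<bullet> ((H * S) *\<^sub>v u) = conjugate u \<bullet> (H *\<^sub>v (S *\<^sub>v u))"
        using assoc_mult_mat_vec[OF Hc Sc u] by simp
      also have "\<dots> = conjugate (adj H *\<^sub>v u) \<bullet> (S *\<^sub>v u)" by (rule adj_vec[OF Hc u Su])
      also have "\<dots> = conjugate (d \<cdot>\<^sub>v u) \<bullet> (S *\<^sub>v u)" unfolding hH Hu ..
      also have "\<dots> = cnj d * qf S u" unfolding qf_def conjugate_smult_vec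
        using smult_scalar_prod_distrib[OF cu Su] by simp
      finally show ?thesis using dreal by simp
    qed
    finally have "d * (qf R u + qf S u) = 0" by (simp add: algebra_simps)
    hence "qf R u + qf S u = 0" using dnz d_def by simp
    hence "Re (qf R u) + Re (qf S u) = 0" by (metis plus_complex.sel(1) zero_complex.sel(1))
    hence "Re (qf R u) = 0" "Re (qf S u) = 0" using qR qS by auto
    hence "qf R u = 0" "qf S u = 0" using qR qS by (metis of_real_0)+
    hence "R *\<^sub>v u = 0\<^sub>v n" "S *\<^sub>v u = 0\<^sub>v n" using psd_q0[OF R u] psd_q0[OF S u] by auto
    hence "H *\<^sub>v u = 0\<^sub>v n" unfolding H_def using minus_mult_distrib_mat_vec[OF Rc Sc u] by simp
    hence "d \<cdot>\<^sub>v u = 0\<^sub>v n" using Hu by simp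
    then obtain j where j: "j < n" "u $ j \<noteq> 0" using u0 u by (metis eq_vecI carrier_vecD index_zero_vec)
    have "(d \<cdot>\<^sub>v u) $ j = d * u $ j" using j u by simp
    thus False using \<open>d \<cdot>\<^sub>v u = 0\<^sub>v n\<close> j dnz d_def by simp
  qed
  have "D = 0\<^sub>m n n"
  proof (rule eq_matI)
    fix i j assume "i < dim_row (0\<^sub>m n n :: complex mat)" "j < dim_col (0\<^sub>m n n :: complex mat)"
    hence i: "i < n" and j: "j < n" by auto
    show "D $$ (i,j) = 0\<^sub>m n n $$ (i,j)"
    proof (cases "i = j")
      case True thus ?thesis using d0[OF i] i by simp
    next
      case False thus ?thesis using dD D i j unfolding diagonal_mat_def by auto
    qed
  qed (insert D, auto)
  hence H0: "H = 0\<^sub>m n n" unfolding HD using right_mult_zero_mat[OF U, of n] left_mult_zero_mat[OF aU, of n] by simp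
  show ?thesis
  proof (rule eq_matI)
    fix i j assume "i < dim_row S" "j < dim_col S"
    hence i: "i < n" and j: "j < n" using Sc by auto
    have "(R - S) $$ (i,j) = 0" using H0 i j unfolding H_def by simp
    thus "R $$ (i,j) = S $$ (i,j)" using i j Rc Sc by simp
  qed (insert Rc Sc, auto)
qed

lemma sqrt_carrier: "psd n E \<Longrightarrow> mat_sqrt E \<in> carrier_mat n n"
proof -
  assume E: "psd n E"
  have dn: "dim_row E = n" using E unfolding psd_def by auto
  obtain R where R: "psd n R" "R * R = E" using psd_sqrt_exists[OF E] by blast
  have "mat_sqrt E = R" unfolding mat_sqrt_def dn
  proof (rule the_equality)
    show "psd n R \<and> R * R = E" using R by simp
    fix R' assume "psd n R' \<and> R' * R' = E" thus "R' = R" using psd_sqrt_unique[of n R' R] R by metis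
  qed
  thus ?thesis using R psd_carrier by simp
qed




lemma char_poly_matrix_alt:
  fixes C :: "'a::comm_ring_1 mat"
  assumes "C \<in> carrier_mat k k"
  shows "char_poly_matrix C = [:0,1:] \<cdot>\<^sub>m 1\<^sub>m k - map_mat (\<lambda>a. [:a:]) C"
  by (rule eq_matI, insert assms, auto simp: char_poly_matrix_def)

lemma sylvester_char_poly:
  fixes A B :: "'a::field mat"
  assumes A: "A \<in> carrier_mat n m" and B: "B \<in> carrier_mat m n"
  shows "[:0,1:]^m * char_poly (A*B) = [:0,1:]^n * char_poly (B*A)"
proof -
  define x :: "'a poly" where "x = [:0,1:]"
  define LA where "LA = map_mat (\<lambda>a. [:a:]) A"
  define LB where "LB = map_mat (\<lambda>a. [:a:]) B"
  have LA: "LA \<in> carrier_mat n m" and LB: "LB \<in> carrier_mat m n" using A B by (auto simp: LA_def LB_def)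
  have LAB: "map_mat (\<lambda>a. [:a:]) (A*B) = LA * LB" unfolding LA_def LB_def using map_poly_mult(1)[OF A B] .
  have LBA: "map_mat (\<lambda>a. [:a:]) (B*A) = LB * LA" unfolding LA_def LB_def using map_poly_mult(1)[OF B A] .
  define M where "M = four_block_mat (x \<cdot>\<^sub>m 1\<^sub>m n) LA LB (1\<^sub>m m)"
  define N1 where "N1 = four_block_mat (1\<^sub>m n) (0\<^sub>m n m) (- LB) (1\<^sub>m m)"
  define N2 where "N2 = four_block_mat (1\<^sub>m n) (0\<^sub>m n m) (- LB) (x \<cdot>\<^sub>m 1\<^sub>m m)"
  have M: "M \<in> carrier_mat (n+m) (n+m)" unfolding M_def by (rule four_block_carrier_mat, auto)
  have N1: "N1 \<in> carrier_mat (n+m) (n+m)" unfolding N1_def by (rule four_block_carrier_mat, auto)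
  have N2: "N2 \<in> carrier_mat (n+m) (n+m)" unfolding N2_def by (rule four_block_carrier_mat, auto)
  have "M * N1 = four_block_mat (x \<cdot>\<^sub>m 1\<^sub>m n * 1\<^sub>m n + LA * - LB) (x \<cdot>\<^sub>m 1\<^sub>m n * 0\<^sub>m n m + LA * 1\<^sub>m m)
     (LB * 1\<^sub>m n + 1\<^sub>m m * - LB) (LB * 0\<^sub>m n m + 1\<^sub>m m * 1\<^sub>m m)"
    unfolding M_def N1_def by (rule mult_four_block_mat, insert LA LB, auto)
  also have "\<dots> = four_block_mat (x \<cdot>\<^sub>m 1\<^sub>m n - LA * LB) LA (0\<^sub>m m n) (1\<^sub>m m)"
    using LA LB by (auto simp: uminus_mult_right_mat minus_add_uminus_mat)
  finally have MN1: "M * N1 = four_block_mat (x \<cdot>\<^sub>m 1\<^sub>m n - LA * LB) LA (0\<^sub>m m n) (1\<^sub>m m)" .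
  have "det (M * N1) = det (x \<cdot>\<^sub>m 1\<^sub>m n - LA * LB) * det (1\<^sub>m m)"
    unfolding MN1 by (rule det_four_block_mat_lower_left_zero, insert LA LB, auto)
  moreover have "char_poly_matrix (A*B) = x \<cdot>\<^sub>m 1\<^sub>m n - LA * LB"
    using char_poly_matrix_alt[of "A*B" n] A B LAB x_def by auto
  moreover have "char_poly_matrix (B*A) = x \<cdot>\<^sub>m 1\<^sub>m m - LB * LA"
    using char_poly_matrix_alt[of "B*A" m] A B LBA x_def by auto
  ultimately have d1: "det M = char_poly (A*B)" and cBA: "char_poly (B*A) = det (x \<cdot>\<^sub>m 1\<^sub>m m - LB * LA)"
    using det_mult[OF M N1] det_four_block_mat_upper_right_zero[of "1\<^sub>m n" n "0\<^sub>m n m" m "- LB" "1\<^sub>m m"] LB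
    unfolding N1_def char_poly_def
    by auto
  have "N2 * M = four_block_mat (1\<^sub>m n * (x \<cdot>\<^sub>m 1\<^sub>m n) + 0\<^sub>m n m * LB) (1\<^sub>m n * LA + 0\<^sub>m n m * 1\<^sub>m m)
     (- LB * (x \<cdot>\<^sub>m 1\<^sub>m n) + (x \<cdot>\<^sub>m 1\<^sub>m m) * LB) (- LB * LA + (x \<cdot>\<^sub>m 1\<^sub>m m) * 1\<^sub>m m)"
    unfolding M_def N2_def by (rule mult_four_block_mat, insert LA LB, auto)
  also have "\<dots> = four_block_mat (x \<cdot>\<^sub>m 1\<^sub>m n) LA (0\<^sub>m m n) (x \<cdot>\<^sub>m 1\<^sub>m m - LB * LA)"
  proof -
    have "- LB * (x \<cdot>\<^sub>m 1\<^sub>m n) + (x \<cdot>\<^sub>m 1\<^sub>m m) * LB = 0\<^sub>m m n"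
      by (rule eq_matI, insert LB, auto)
    moreover have "- LB * LA + (x \<cdot>\<^sub>m 1\<^sub>m m) * 1\<^sub>m m = x \<cdot>\<^sub>m 1\<^sub>m m - LB * LA"
      by (rule eq_matI, insert LB LA, auto)
    ultimately show ?thesis using LA LB by auto
  qed
  finally have N2M: "N2 * M = four_block_mat (x \<cdot>\<^sub>m 1\<^sub>m n) LA (0\<^sub>m m n) (x \<cdot>\<^sub>m 1\<^sub>m m - LB * LA)" .
  have "det (N2 * M) = det (x \<cdot>\<^sub>m 1\<^sub>m n) * det (x \<cdot>\<^sub>m 1\<^sub>m m - LB * LA)"
    unfolding N2M by (rule det_four_block_mat_lower_left_zero, insert LA LB, auto)
  moreover have "det N2 = det (1\<^sub>m n) * det (x \<cdot>\<^sub>m 1\<^sub>m m)"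
    unfolding N2_def by (rule det_four_block_mat_upper_right_zero, insert LB, auto)
  ultimately have "x^m * det M = x^n * char_poly (B*A)"
    using det_mult[OF N2 M]
    unfolding cBA
    by (auto simp: det_smult)
  thus ?thesis using d1 unfolding x_def by simp
qed



lemma sum_split_nm: "(\<Sum>a<n*m. f a) = (\<Sum>i<n. \<Sum>j<m. f (i*m+j::nat))"
proof (induction n)
  case 0 then show ?case by simp
next
  case (Suc n)
  have "{..<Suc n * m} = {..<n*m} \<union> {n*m..<n*m+m}" by auto
  hence "(\<Sum>a<Suc n*m. f a) = (\<Sum>a<n*m. f a) + (\<Sum>a\<in>{n*m..<n*m+m}. f a)"
    by (simp add: sum.union_disjoint ivl_disj_int)
  also have "(\<Sum>a\<in>{n*m..<n*m+m}. f a) = (\<Sum>j<m. f (n*m+j))"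
    by (rule sum.reindex_bij_witness[of _ "\<lambda>j. n*m+j" "\<lambda>a. a - n*m"]) auto
  finally show ?case using Suc by simp
qed

definition outer :: "complex vec \<Rightarrow> complex vec \<Rightarrow> complex mat" where
  "outer y z = mat (dim_vec y) (dim_vec z) (\<lambda>(a,b). y $ a * cnj (z $ b))"

definition resh :: "nat \<Rightarrow> nat \<Rightarrow> complex vec \<Rightarrow> complex mat" where
  "resh n m y = mat n m (\<lambda>(i,j). y $ (i*m+j))"

lemma idx_lt: "i < n \<Longrightarrow> j < m \<Longrightarrow> i*m+j < n*(m::nat)"
proof -
  assume a: "i < n" "j < m"
  have "i*m+j < (i+1)*m" using a by simp
  also have "(i+1)*m \<le> n*m" using a by (intro mult_le_mono1) simp
  finally show ?thesis .
qed

lemma ptrace_R_outer: assumes "y \<in> carrier_vec (n*m)" "z \<in> carrier_vec (n*m)"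
  shows "ptrace_R n m (outer y z) = resh n m y * adj (resh n m z)"
  by (rule eq_matI, insert assms, auto simp: ptrace_R_def outer_def resh_def scalar_prod_def idx_lt atLeast0LessThan)

lemma ptrace_S_outer: assumes "y \<in> carrier_vec (n*m)" "z \<in> carrier_vec (n*m)"
  shows "ptrace_S n m (outer y z) = transpose_mat (adj (resh n m z) * resh n m y)"
proof (rule eq_matI)
  fix j l assume jl: "j < dim_row (transpose_mat (adj (resh n m z) * resh n m y))" 
     "l < dim_col (transpose_mat (adj (resh n m z) * resh n m y))"
  hence j: "j < m" and l: "l < m" by (auto simp: resh_def)
  have "ptrace_S n m (outer y z) $$ (j, l) = (\<Sum>i<n. y $ (i*m+j) * cnj (z $ (i*m+l)))"
    using assms j l by (auto simp: ptrace_S_def outer_def idx_lt intro!: sum.cong)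
  also have "\<dots> = transpose_mat (adj (resh n m z) * resh n m y) $$ (j, l)"
    using assms j l by (auto simp: resh_def scalar_prod_def atLeast0LessThan mult.commute intro!: sum.cong)
  finally show "ptrace_S n m (outer y z) $$ (j, l) = transpose_mat (adj (resh n m z) * resh n m y) $$ (j, l)" .
qed (auto simp: ptrace_S_def resh_def)

lemma proj_outer: "proj y = outer y y"
  unfolding proj_def outer_def by simp

lemma dm_simps[simp]: "j < m \<Longrightarrow> (i*m+j) div m = (i::nat)" "j < m \<Longrightarrow> (i*m+j) mod m = (j::nat)"
  by auto

lemma tensor_idx: assumes R: "R \<in> carrier_mat n n" and "i < n" "j < m" "k < n" "l < m"
  shows "tensor_mat R (1\<^sub>m m) $$ (i*m+j, k*m+l) = R $$ (i,k) * (if j = l then 1 else 0)"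
  using assms by (auto simp: tensor_mat_def idx_lt)

lemma tensor_carrier: "R \<in> carrier_mat n n \<Longrightarrow> tensor_mat R (1\<^sub>m m) \<in> carrier_mat (n*m) (n*m)"
  by (auto simp: tensor_mat_def)

lemma resh_tensor: assumes R: "R \<in> carrier_mat n n" and y: "y \<in> carrier_vec (n*m)"
  shows "resh n m (tensor_mat R (1\<^sub>m m) *\<^sub>v y) = R * resh n m y"
proof (rule eq_matI)
  fix i j assume "i < dim_row (R * resh n m y)" "j < dim_col (R * resh n m y)"
  hence i: "i < n" and j: "j < m" using R by (auto simp: resh_def)
  have "resh n m (tensor_mat R (1\<^sub>m m) *\<^sub>v y) $$ (i,j) = (\<Sum>a<n*m. tensor_mat R (1\<^sub>m m) $$ (i*m+j, a) * y $ a)"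
    using i j R y tensor_carrier[OF R, of m]
    by (auto simp: resh_def mult_mat_vec_def scalar_prod_def idx_lt atLeast0LessThan)
  also have "\<dots> = (\<Sum>k<n. \<Sum>l<m. R $$ (i,k) * (if j = l then 1 else 0) * y $ (k*m+l))"
    unfolding sum_split_nm
    apply (rule sum.cong[OF refl], rule sum.cong[OF refl])
    apply (subst tensor_idx[OF R i j], auto)
    done
  also have "\<dots> = (\<Sum>k<n. R $$ (i,k) * y $ (k*m+j))"
  proof (rule sum.cong[OF refl])
    fix k
    have "(\<Sum>l<m. R $$ (i,k) * (if j = l then 1 else 0) * y $ (k*m+l)) = (\<Sum>l<m. if l = j then R $$ (i,k) * y $ (k*m+l) else 0)"
      by (rule sum.cong) auto
    also have "\<dots> = R $$ (i,k) * y $ (k*m+j)" using j by (simp add: sum.delta)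
    finally show "(\<Sum>l<m. R $$ (i,k) * (if j = l then 1 else 0) * y $ (k*m+l)) = R $$ (i,k) * y $ (k*m+j)" .
  qed
  also have "\<dots> = (R * resh n m y) $$ (i,j)"
    using i j R by (auto simp: resh_def scalar_prod_def atLeast0LessThan intro!: sum.cong)
  finally show "resh n m (tensor_mat R (1\<^sub>m m) *\<^sub>v y) $$ (i,j) = (R * resh n m y) $$ (i,j)" .
qed (insert R, auto simp: resh_def tensor_mat_def)

lemma adj_tensor: assumes R: "R \<in> carrier_mat n n"
  shows "adj (tensor_mat R (1\<^sub>m m)) = tensor_mat (adj R) (1\<^sub>m m)"
proof (rule eq_matI)
  fix a b assume ab: "a < dim_row (tensor_mat (adj R) (1\<^sub>m m))" "b < dim_col (tensor_mat (adj R) (1\<^sub>m m))"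
  hence a: "a < n*m" and b: "b < n*m" using R by (auto simp: tensor_mat_def)
  hence m: "m > 0" by (cases m, auto)
  have "a div m < n" "b div m < n" using a b m by (auto simp: less_mult_imp_div_less)
  thus "adj (tensor_mat R (1\<^sub>m m)) $$ (a, b) = tensor_mat (adj R) (1\<^sub>m m) $$ (a, b)"
    using a b m R by (auto simp: tensor_mat_def)
qed (insert R, auto simp: tensor_mat_def)

lemma proj_sandwich: assumes T: "T \<in> carrier_mat N N" and y: "y \<in> carrier_vec N"
  shows "T * proj y * T = outer (T *\<^sub>v y) (adj T *\<^sub>v y)"
proof (rule eq_matI)
  fix a b assume "a < dim_row (outer (T *\<^sub>v y) (adj T *\<^sub>v y))" "b < dim_col (outer (T *\<^sub>v y) (adj T *\<^sub>v y))"
  hence a: "a < N" and b: "b < N" using T by (auto simp: outer_def)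
  have "(T * proj y * T) $$ (a,b) = (\<Sum>d<N. (\<Sum>c<N. T $$ (a,c) * (y $ c * cnj (y $ d))) * T $$ (d,b))"
    using a b T y by (auto simp: proj_def scalar_prod_def atLeast0LessThan intro!: sum.cong)
  also have "\<dots> = (\<Sum>c<N. T $$ (a,c) * y $ c) * (\<Sum>d<N. cnj (y $ d) * T $$ (d,b))"
    by (simp add: sum_distrib_left sum_distrib_right ac_simps)
  also have "\<dots> = outer (T *\<^sub>v y) (adj T *\<^sub>v y) $$ (a,b)"
    using a b T y by (auto simp: outer_def mult_mat_vec_def scalar_prod_def atLeast0LessThan cnj_sum mult.commute intro!: sum.cong)
  finally show "(T * proj y * T) $$ (a,b) = outer (T *\<^sub>v y) (adj T *\<^sub>v y) $$ (a,b)" .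
qed (insert T y, auto simp: outer_def)


lemma transpose_smult: "transpose_mat (c \<cdot>\<^sub>m A) = c \<cdot>\<^sub>m transpose_mat A"
  by (rule eq_matI, auto)

lemma char_poly_nz: "A \<in> carrier_mat n n \<Longrightarrow> char_poly (A::'a::field mat) \<noteq> 0"
  using degree_monic_char_poly[of A n] by auto

lemma proots_xpow: "proots ([:0,1::complex:]^k) = replicate_mset k 0"
proof -
  have "proots [:0,1::complex:] = {#0#}" using proots_linear_factor[of 0] by simp
  thus ?thesis by (simp add: proots_power repeat_mset_replicate_mset)
qed

lemma entropy_eq:
  assumes P: "P \<in> carrier_mat n n" and Q: "Q \<in> carrier_mat m m"
    and eq: "[:0,1:]^m * char_poly P = [:0,1:]^n * char_poly Q"
  shows "vn_entropy P = vn_entropy Q"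
proof -
  have "proots ([:0,1:]^m * char_poly P) = replicate_mset m 0 + proots (char_poly P)"
    by (subst proots_mult, auto simp: char_poly_nz[OF P] proots_xpow)
  moreover have "proots ([:0,1:]^n * char_poly Q) = replicate_mset n 0 + proots (char_poly Q)"
    by (subst proots_mult, auto simp: char_poly_nz[OF Q] proots_xpow)
  ultimately have "(\<Sum>x\<in># replicate_mset m 0 + proots (char_poly P). xlnx (Re x)) =
     (\<Sum>x\<in># replicate_mset n 0 + proots (char_poly Q). xlnx (Re x))" using eq by metis
  thus ?thesis unfolding vn_entropy_def by (simp add: xlnx_def)
qed

lemma entropy_swap: assumes A: "A \<in> carrier_mat n m" and B: "B \<in> carrier_mat m n"
  shows "vn_entropy (A * B) = vn_entropy (transpose_mat (B * A))"
proof -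
  have "vn_entropy (A * B) = vn_entropy (B * A)"
    by (rule entropy_eq[of _ n _ m], insert A B sylvester_char_poly[OF A B], auto)
  moreover have "char_poly (transpose_mat (B * A)) = char_poly (B * A)"
    by (rule char_poly_transpose_mat, insert A B, auto)
  ultimately show ?thesis unfolding vn_entropy_def by simp
qed

theorem theorem4p6:
  fixes n m :: nat and \<rho> :: "complex mat" and B :: "'b set" and E :: "'b \<Rightarrow> complex mat"
    and \<Psi> :: "complex vec"
  assumes rho: "density_op n \<rho>"
    and E: "povm n B E"
    and Psi: "\<Psi> \<in> carrier_vec (n * m)"
    and pur: "ptrace_R n m (proj \<Psi>) = \<rho>"
  defines "\<rho>b \<equiv> (\<lambda>b. (1 / of_real (prob E \<rho> b)) \<cdot>\<^sub>m (mat_sqrt (E b) * \<rho> * mat_sqrt (E b)))"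
    and "\<rho>R \<equiv> ptrace_S n m (proj \<Psi>)"
    and "\<rho>Rb \<equiv> (\<lambda>b. (1 / of_real (prob E \<rho> b)) \<cdot>\<^sub>m
           ptrace_S n m (tensor_mat (mat_sqrt (E b)) (1\<^sub>m m) * proj \<Psi> *
                         tensor_mat (mat_sqrt (E b)) (1\<^sub>m m)))"
  shows "vn_entropy \<rho> - (\<Sum>b\<in>{b\<in>B. prob E \<rho> b > 0}. prob E \<rho> b * vn_entropy (\<rho>b b))
       = vn_entropy \<rho>R - (\<Sum>b\<in>{b\<in>B. prob E \<rho> b > 0}. prob E \<rho> b * vn_entropy (\<rho>Rb b))"
proof -
  define X where "X = resh n m \<Psi>"
  have X: "X \<in> carrier_mat n m" unfolding X_def resh_def by auto
  have rhoX: "\<rho> = X * adj X"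
    using pur ptrace_R_outer[OF Psi Psi] unfolding proj_outer X_def by simp
  have rhoRX: "\<rho>R = transpose_mat (adj X * X)"
    using ptrace_S_outer[OF Psi Psi] unfolding \<rho>R_def proj_outer X_def by simp
  have e0: "vn_entropy \<rho> = vn_entropy \<rho>R"
    unfolding rhoX rhoRX by (rule entropy_swap[OF X], insert X, auto)
  have eb: "vn_entropy (\<rho>b b) = vn_entropy (\<rho>Rb b)" if b: "b \<in> B" for b
  proof -
    define R where "R = mat_sqrt (E b)"
    define c :: complex where "c = 1 / of_real (prob E \<rho> b)"
    have R: "R \<in> carrier_mat n n" unfolding R_def
      using E b by (intro sqrt_carrier) (auto simp: povm_def)
    define T where "T = tensor_mat R (1\<^sub>m m)"
    have T: "T \<in> carrier_mat (n*m) (n*m)" unfolding T_def using tensor_carrier[OF R] .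
    have RX: "R * X \<in> carrier_mat n m" using R X by auto
    have XR: "adj X * R \<in> carrier_mat m n" using R X by auto
    have "\<rho>b b = c \<cdot>\<^sub>m (R * (X * adj X) * R)" unfolding \<rho>b_def c_def R_def rhoX ..
    also have "R * (X * adj X) * R = (R * X) * (adj X * R)"
    proof -
      have XA: "adj X \<in> carrier_mat m n" using X by simp
      have "R * (X * adj X) = (R * X) * adj X" using assoc_mult_mat[OF R X XA] by simp
      thus ?thesis using assoc_mult_mat[OF RX XA R] by simp
    qed
    also have "c \<cdot>\<^sub>m \<dots> = (c \<cdot>\<^sub>m (R * X)) * (adj X * R)"
      using RX XR by (simp add: mult_smult_assoc_mat)
    finally have 1: "\<rho>b b = (c \<cdot>\<^sub>m (R * X)) * (adj X * R)" .
    have "\<rho>Rb b = c \<cdot>\<^sub>m ptrace_S n m (T * proj \<Psi> * T)" unfolding \<rho>Rb_def c_def R_def T_def ..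
    also have "T * proj \<Psi> * T = outer (T *\<^sub>v \<Psi>) (adj T *\<^sub>v \<Psi>)" by (rule proj_sandwich[OF T Psi])
    also have "adj T = tensor_mat (adj R) (1\<^sub>m m)" unfolding T_def by (rule adj_tensor[OF R])
    also have "ptrace_S n m (outer (T *\<^sub>v \<Psi>) (tensor_mat (adj R) (1\<^sub>m m) *\<^sub>v \<Psi>))
       = transpose_mat (adj (adj R * X) * (R * X))"
      using ptrace_S_outer[of "T *\<^sub>v \<Psi>" n m "tensor_mat (adj R) (1\<^sub>m m) *\<^sub>v \<Psi>"]
        resh_tensor[OF R Psi] resh_tensor[of "adj R" n \<Psi> m] R Psi T tensor_carrier[of "adj R" n m]
      unfolding X_def T_def by auto
    also have "adj (adj R * X) = adj X * R" using adj_mult[of "adj R" n n X m] R X by simp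
    also have "c \<cdot>\<^sub>m transpose_mat (adj X * R * (R * X)) = transpose_mat ((adj X * R) * (c \<cdot>\<^sub>m (R * X)))"
      using RX XR by (simp add: mult_smult_distrib[OF XR RX] transpose_smult)
    finally have 2: "\<rho>Rb b = transpose_mat ((adj X * R) * (c \<cdot>\<^sub>m (R * X)))" .
    show ?thesis unfolding 1 2 by (rule entropy_swap, insert RX XR, auto)
  qed
  have "(\<Sum>b\<in>{b\<in>B. prob E \<rho> b > 0}. prob E \<rho> b * vn_entropy (\<rho>b b))
      = (\<Sum>b\<in>{b\<in>B. prob E \<rho> b > 0}. prob E \<rho> b * vn_entropy (\<rho>Rb b))"
    by (rule sum.cong) (auto simp: eb)
  thus ?thesis using e0 by simp
qed


end
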